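(* For every nonnegative integer $n$, $$\sum_{k=0}^{\infty}(-1)^k(4k+1)\,\frac{(-3n)_k\,(-2n+\tfrac16)_k\,(\tfrac12)_k}{k!\,(2n+\tfrac43)_k\,(3n+\tfrac32)_k}=\left(\frac{2^2 3^3}{5^5}\right)^n\frac{(\tfrac56)_n(\tfrac12)_n(\tfrac76)_n^2}{(\tfrac{7}{15})_n(\tfrac{13}{15})_n(\tfrac{16}{15})_n(\tfrac{4}{15})_n}.$$ (The sum is finite, since $(-3n)_k=0$ for $k>3n$.)
   Context: $(a)_j=\Gamma(a+j)/\Gamma(a)=a(a+1)\cdots(a+j-1)$ denotes the rising factorial (Pochhammer symbol), with $(a)_0=1$. *)

theory Defs
  imports "HOL-Analysis.Analysis"
begin

end

theory Submission imports Defs begin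

definition Qi :: "real \<Rightarrow> real \<Rightarrow> real" where "Qi x y = ((- 230376440) + x * ((- 4127770248) + x * ((- 32259380058) + x * ((- 145061030682) + x * ((- 416238183648) + x * ((- 797353950168) + x * ((- 1033879370688) + x * ((- 896951213208) + x * ((- 498790524672) + x * ((- 160707128544) + x * ((- 22803306624)))))))))))) + y * (((- 148932966) + x * ((- 2347545681) + x * ((- 16158535749) + x * ((- 63609743556) + x * ((- 157710222180) + x * ((- 255363381216) + x * ((- 270089653608) + x * ((- 179996416056) + x * ((- 68611788720) + x * ((- 11401653312))))))))))) + y * (((68653515) + x * ((972884520) + x * ((5848635996) + x * ((19537807338) + x * ((39730937400) + x * ((50423442840) + x * ((39041291736) + x * ((16876046736) + x * ((3120306624)))))))))) + y * (((78533595) + x * ((843217155) + x * ((3923826705) + x * ((10158086232) + x * ((15712521912) + x * ((14462491032) + x * ((7310633616) + x * ((1560153312))))))))) + y * (((- 17630739) + x * ((- 187271028) + x * ((- 781594434) + x * ((- 1680946668) + x * ((- 1979672400) + x * ((- 1214362368) + x * ((- 302750784)))))))) + y * (((- 27075573) + x * ((- 183875022) + x * ((- 518031288) + x * ((- 740716488) + x * ((- 532088352) + x * ((- 151375392))))))) + y * (((2236248) + x * ((17429904) + x * ((43547544) + x * ((46014480) + x * ((17216064)))))) + y * (((4340952) + x * ((15641424) + x * ((20260368) + x * ((8608032))))) + y * (((- 81648) + x * ((- 559872) + x * ((- 419904)))) + y * (((- 244944) + x * ((- 209952))))))))))))"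

definition DD :: "real \<Rightarrow> real" where "DD x = (15*x+7)*(15*x+13)*(15*x+16)*(15*x+4)"
definition NN :: "real \<Rightarrow> real" where "NN x = 81/20*(6*x+5)*(2*x+1)*(6*x+7)^2"
definition KK :: "real \<Rightarrow> real" where "KK x = (x+1)*(3*x+1)*(3*x+2)^2*(12*x+5)*(12*x+11)"

lemma polyid: fixes x y :: real shows
 "60*KK x*DD x*(4*y+1)*(3*x+7/2)*(2*x+10/3+y)
  + 17496*(6*x+7)*(4*y+1)*((y-3*x-3)*(y-3*x-2)*(y-3*x-1)*(y-2*x-11/6)*(y-2*x-5/6)*(2*x+4/3+y)*(2*x+7/3+y)*(3*x+3/2+y)*(3*x+5/2+y))*(2*x+10/3+y)*(3*x+7/2+y)
  = -((y-3*x-3)*(y-2*x-11/6)*(y+1/2))*Qi x (y+1) - y*Qi x y*(2*x+10/3+y)*(3*x+7/2+y)"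
  unfolding Qi_def KK_def DD_def by algebra

lemma poch_shift: "pochhammer (a::real) k * (a + of_nat k) = a * pochhammer (a+1) k"
  by (metis pochhammer_Suc pochhammer_rec)

definition tt :: "nat \<Rightarrow> nat \<Rightarrow> real" where
 "tt n k = (-1::real) ^ k * (4 * real k + 1) *
            (pochhammer (- 3 * real n) k * pochhammer (- 2 * real n + 1/6) k * pochhammer (1/2) k)
            / (fact k * pochhammer (2 * real n + 4/3) k * pochhammer (3 * real n + 3/2) k)"

definition cc :: "nat \<Rightarrow> nat \<Rightarrow> real" where
 "cc n k = (-1::real) ^ k *
            (pochhammer (- 3 * real n - 3) k * pochhammer (- 2 * real n - 11/6) k * pochhammer (1/2) k)
            / (fact k * pochhammer (2 * real n + 10/3) k * pochhammer (3 * real n + 7/2) k)"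

definition RR :: "nat \<Rightarrow> real" where
 "RR n = ((2^2 * 3^3) / 5^5) ^ n *
           (pochhammer (5/6) n * pochhammer (1/2) n * (pochhammer (7/6) n)^2)
           / (pochhammer (7/15) n * pochhammer (13/15) n * pochhammer (16/15) n * pochhammer (4/15) n)"

lemma lemA: "tt (Suc n) k * (3*real n+7/2+real k) = (4*real k+1)*cc n k*(3*real n+7/2)"
proof -
  define x where "x = real n"
  define y where "y = real k"
  have x0: "x \<ge> 0" by (simp add: x_def)
  have y0: "y \<ge> 0" by (simp add: y_def)
  have a1: "- 3 * real (Suc n) = - 3 * x - 3" "- 2 * real (Suc n) + 1/6 = - 2 * x - 11/6"
     "2 * real (Suc n) + 4/3 = 2*x+10/3" "3 * real (Suc n) + 3/2 = 3*x+9/2"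
    by (simp_all add: x_def algebra_simps)
  have e0: "pochhammer (3*x+9/2) k * (3*x+7/2) = pochhammer (3*x+7/2) k * (3*x+7/2+y)"
    using poch_shift[of "3*x+7/2" k] unfolding y_def by (simp add: algebra_simps)
  define q1 where "q1 = pochhammer (- 3 * x - 3) k"
  define q2 where "q2 = pochhammer (- 2 * x - 11/6) k"
  define h where "h = pochhammer (1/2::real) k"
  define s1 where "s1 = pochhammer (2*x+10/3) k"
  define s2 where "s2 = pochhammer (3*x+7/2) k"
  define u2 where "u2 = pochhammer (3*x+9/2) k"
  define f where "f = (fact k::real)"
  have p1: "s1 > 0" unfolding s1_def by (rule pochhammer_pos) (use x0 in auto)
  have p2: "s2 > 0" unfolding s2_def by (rule pochhammer_pos) (use x0 in auto)
  have p3: "u2 > 0" unfolding u2_def by (rule pochhammer_pos) (use x0 in auto)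
  have ff: "f > 0" by (simp add: f_def)
  have e: "u2 * (3*x+7/2) = s2 * (3*x+7/2+y)" using e0 unfolding u2_def s2_def .
  have r: "tt (Suc n) k = (-1::real) ^ k * (4 * y + 1) * (q1 * q2 * h) / (f * s1 * u2)"
    unfolding tt_def a1 q1_def q2_def h_def f_def s1_def u2_def y_def ..
  have r2: "cc n k = (-1::real) ^ k * (q1 * q2 * h) / (f * s1 * s2)"
    unfolding cc_def q1_def q2_def h_def f_def s1_def s2_def x_def ..
  have "tt (Suc n) k * (3*x+7/2+y) * (u2 * (3*x+7/2)) = (4*y+1)*cc n k*(3*x+7/2) * (s2 * (3*x+7/2+y))"
    unfolding r r2 using p1 p2 p3 ff by (simp add: field_simps)
  then have "tt (Suc n) k * (3*x+7/2+y) * (s2 * (3*x+7/2+y)) = (4*y+1)*cc n k*(3*x+7/2) * (s2 * (3*x+7/2+y))"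
    by (simp only: e)
  moreover have "s2 * (3*x+7/2+y) \<noteq> 0" using p2 x0 y0 by simp
  ultimately show ?thesis unfolding x_def y_def by simp
qed

lemma poch_sh: "b = a + 1 \<Longrightarrow> z = a + real k \<Longrightarrow> pochhammer (a::real) k * z = a * pochhammer b k"
  using poch_shift[of a k] by simp

lemma cancel_helper: "(w::real) \<noteq> 0 \<Longrightarrow> a / (b * w) * w = a / b"
  by (cases "b = 0") (simp_all add: field_simps)

lemma lemB: "tt n k * (((real n+1)*(3*real n+1)*(3*real n+2)^2*(12*real n+5)*(12*real n+11))*(6*real n+7)*(2*real n+1)*(6*real n+5))
  = -72*(4*real k+1)*cc n k*((real k-3*real n-3)*(real k-3*real n-2)*(real k-3*real n-1)*(real k-2*real n-11/6)*(real k-2*real n-5/6)*(2*real n+4/3+real k)*(2*real n+7/3+real k)*(3*real n+3/2+real k)*(3*real n+5/2+real k))"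
proof -
  define x where "x = real n"
  define y where "y = real k"
  have x0: "x \<ge> 0" by (simp add: x_def)
  have y0: "y \<ge> 0" by (simp add: y_def)
  define q1 where "q1 = pochhammer (- 3 * x - 3) k"
  define q2 where "q2 = pochhammer (- 2 * x - 11/6) k"
  define p1 where "p1 = pochhammer (- 3 * x) k"
  define p2 where "p2 = pochhammer (- 2 * x + 1/6) k"
  define h where "h = pochhammer (1/2::real) k"
  define s1 where "s1 = pochhammer (2*x+10/3) k"
  define s2 where "s2 = pochhammer (3*x+7/2) k"
  define r1 where "r1 = pochhammer (2*x+4/3) k"
  define r2 where "r2 = pochhammer (3*x+3/2) k"
  define f where "f = (fact k::real)"
  have ps1: "s1 > 0" unfolding s1_def by (rule pochhammer_pos) (use x0 in auto)
  have ps2: "s2 > 0" unfolding s2_def by (rule pochhammer_pos) (use x0 in auto)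
  have pr1: "r1 > 0" unfolding r1_def by (rule pochhammer_pos) (use x0 in auto)
  have pr2: "r2 > 0" unfolding r2_def by (rule pochhammer_pos) (use x0 in auto)
  have ff: "f > 0" by (simp add: f_def)
  have q1a: "pochhammer (- 3 * x - 3) k * (- 3 * x - 3 + y) = (- 3 * x - 3) * pochhammer (- 3 * x - 2) k"
    by (rule poch_sh) (simp_all add: y_def)
  have q1b: "pochhammer (- 3 * x - 2) k * (- 3 * x - 2 + y) = (- 3 * x - 2) * pochhammer (- 3 * x - 1) k"
    by (rule poch_sh) (simp_all add: y_def)
  have q1c: "pochhammer (- 3 * x - 1) k * (- 3 * x - 1 + y) = (- 3 * x - 1) * pochhammer (- 3 * x) k"
    by (rule poch_sh) (simp_all add: y_def)
  have q2a: "pochhammer (- 2 * x - 11/6) k * (- 2 * x - 11/6 + y) = (- 2 * x - 11/6) * pochhammer (- 2 * x - 5/6) k"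
    by (rule poch_sh) (simp_all add: y_def)
  have q2b: "pochhammer (- 2 * x - 5/6) k * (- 2 * x - 5/6 + y) = (- 2 * x - 5/6) * pochhammer (- 2 * x + 1/6) k"
    by (rule poch_sh) (simp_all add: y_def)
  have r1a: "pochhammer (2*x+4/3) k * (2*x+4/3 + y) = (2*x+4/3) * pochhammer (2*x+7/3) k"
    by (rule poch_sh) (simp_all add: y_def)
  have r1b: "pochhammer (2*x+7/3) k * (2*x+7/3 + y) = (2*x+7/3) * pochhammer (2*x+10/3) k"
    by (rule poch_sh) (simp_all add: y_def)
  have r2a: "pochhammer (3*x+3/2) k * (3*x+3/2 + y) = (3*x+3/2) * pochhammer (3*x+5/2) k"
    by (rule poch_sh) (simp_all add: y_def)
  have r2b: "pochhammer (3*x+5/2) k * (3*x+5/2 + y) = (3*x+5/2) * pochhammer (3*x+7/2) k"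
    by (rule poch_sh) (simp_all add: y_def)
  have E1: "q1 * ((- 3 * x - 3 + y)*(- 3 * x - 2 + y)*(- 3 * x - 1 + y)) = ((- 3 * x - 3)*(- 3 * x - 2)*(- 3 * x - 1)) * p1"
  proof -
    have "q1 * ((- 3 * x - 3 + y)*(- 3 * x - 2 + y)*(- 3 * x - 1 + y))
       = ((q1 * (- 3 * x - 3 + y))*(- 3 * x - 2 + y))*(- 3 * x - 1 + y)" by (simp only: mult.assoc)
    also have "\<dots> = (((- 3 * x - 3) * pochhammer (- 3 * x - 2) k)*(- 3 * x - 2 + y))*(- 3 * x - 1 + y)"
      unfolding q1_def q1a ..
    also have "\<dots> = (- 3 * x - 3) * ((pochhammer (- 3 * x - 2) k*(- 3 * x - 2 + y))*(- 3 * x - 1 + y))"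
      by (simp only: mult.assoc)
    also have "\<dots> = (- 3 * x - 3) * (((- 3 * x - 2) * pochhammer (- 3 * x - 1) k)*(- 3 * x - 1 + y))"
      unfolding q1b ..
    also have "\<dots> = (- 3 * x - 3) * (- 3 * x - 2) * (pochhammer (- 3 * x - 1) k*(- 3 * x - 1 + y))"
      by (simp only: mult.assoc)
    also have "\<dots> = (- 3 * x - 3) * (- 3 * x - 2) * ((- 3 * x - 1) * p1)"
      unfolding q1c p1_def ..
    also have "\<dots> = ((- 3 * x - 3)*(- 3 * x - 2)*(- 3 * x - 1)) * p1"
      by (simp only: mult.assoc)
    finally show ?thesis .
  qed
  have E2: "q2 * ((- 2 * x - 11/6 + y)*(- 2 * x - 5/6 + y)) = ((- 2 * x - 11/6)*(- 2 * x - 5/6)) * p2"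
  proof -
    have "q2 * ((- 2 * x - 11/6 + y)*(- 2 * x - 5/6 + y)) = (q2 * (- 2 * x - 11/6 + y))*(- 2 * x - 5/6 + y)" by (simp only: mult.assoc)
    also have "\<dots> = ((- 2 * x - 11/6) * pochhammer (- 2 * x - 5/6) k)*(- 2 * x - 5/6 + y)" unfolding q2_def q2a ..
    also have "\<dots> = (- 2 * x - 11/6) * (pochhammer (- 2 * x - 5/6) k*(- 2 * x - 5/6 + y))" by (simp only: mult.assoc)
    also have "\<dots> = (- 2 * x - 11/6) * ((- 2 * x - 5/6) * p2)" unfolding q2b p2_def ..
    also have "\<dots> = ((- 2 * x - 11/6)*(- 2 * x - 5/6)) * p2" by (simp only: mult.assoc)
    finally show ?thesis .
  qed
  have E3: "r1 * ((2*x+4/3 + y)*(2*x+7/3 + y)) = ((2*x+4/3)*(2*x+7/3)) * s1"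
  proof -
    have "r1 * ((2*x+4/3 + y)*(2*x+7/3 + y)) = (r1 * (2*x+4/3 + y))*(2*x+7/3 + y)" by (simp only: mult.assoc)
    also have "\<dots> = ((2*x+4/3) * pochhammer (2*x+7/3) k)*(2*x+7/3 + y)" unfolding r1_def r1a ..
    also have "\<dots> = (2*x+4/3) * (pochhammer (2*x+7/3) k*(2*x+7/3 + y))" by (simp only: mult.assoc)
    also have "\<dots> = (2*x+4/3) * ((2*x+7/3) * s1)" unfolding r1b s1_def ..
    also have "\<dots> = ((2*x+4/3)*(2*x+7/3)) * s1" by (simp only: mult.assoc)
    finally show ?thesis .
  qed
  have E4: "r2 * ((3*x+3/2 + y)*(3*x+5/2 + y)) = ((3*x+3/2)*(3*x+5/2)) * s2"
  proof -
    have "r2 * ((3*x+3/2 + y)*(3*x+5/2 + y)) = (r2 * (3*x+3/2 + y))*(3*x+5/2 + y)" by (simp only: mult.assoc)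
    also have "\<dots> = ((3*x+3/2) * pochhammer (3*x+5/2) k)*(3*x+5/2 + y)" unfolding r2_def r2a ..
    also have "\<dots> = (3*x+3/2) * (pochhammer (3*x+5/2) k*(3*x+5/2 + y))" by (simp only: mult.assoc)
    also have "\<dots> = (3*x+3/2) * ((3*x+5/2) * s2)" unfolding r2b s2_def ..
    also have "\<dots> = ((3*x+3/2)*(3*x+5/2)) * s2" by (simp only: mult.assoc)
    finally show ?thesis .
  qed
  have n1: "(- 3 * x - 3)*(- 3 * x - 2)*(- 3 * x - 1) \<noteq> 0"
  proof -
    have h0: "- 3 * x - 3 \<noteq> 0" using x0 by linarith
    have h1: "- 3 * x - 2 \<noteq> 0" using x0 by linarith
    have h2: "- 3 * x - 1 \<noteq> 0" using x0 by linarith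
    show ?thesis using h0 h1 h2 by simp
  qed
  have n2: "(- 2 * x - 11/6)*(- 2 * x - 5/6) \<noteq> 0"
  proof -
    have h0: "- 2 * x - 11/6 \<noteq> 0" using x0 by linarith
    have h1: "- 2 * x - 5/6 \<noteq> 0" using x0 by linarith
    show ?thesis using h0 h1 by simp
  qed
  have n3: "(2*x+4/3 + y)*(2*x+7/3 + y) \<noteq> 0"
  proof -
    have h0: "2*x+4/3 + y \<noteq> 0" using x0 y0 by linarith
    have h1: "2*x+7/3 + y \<noteq> 0" using x0 y0 by linarith
    show ?thesis using h0 h1 by simp
  qed
  have n4: "(3*x+3/2 + y)*(3*x+5/2 + y) \<noteq> 0"
  proof -
    have h0: "3*x+3/2 + y \<noteq> 0" using x0 y0 by linarith
    have h1: "3*x+5/2 + y \<noteq> 0" using x0 y0 by linarith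
    show ?thesis using h0 h1 by simp
  qed
  define C1 where "C1 = (- 3 * x - 3)*(- 3 * x - 2)*(- 3 * x - 1)"
  define C2 where "C2 = (- 2 * x - 11/6)*(- 2 * x - 5/6)"
  define D1 where "D1 = (2*x+4/3)*(2*x+7/3)"
  define D2 where "D2 = (3*x+3/2)*(3*x+5/2)"
  define m1 where "m1 = (- 3 * x - 3 + y)*(- 3 * x - 2 + y)*(- 3 * x - 1 + y)"
  define m2 where "m2 = (- 2 * x - 11/6 + y)*(- 2 * x - 5/6 + y)"
  define d1 where "d1 = (2*x+4/3 + y)*(2*x+7/3 + y)"
  define d2 where "d2 = (3*x+3/2 + y)*(3*x+5/2 + y)"
  have E1': "C1*p1 = q1*m1" using E1 unfolding C1_def m1_def by simp
  have E2': "C2*p2 = q2*m2" using E2 unfolding C2_def m2_def by simp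
  have E3': "r1*d1 = D1* s1" using E3 unfolding D1_def d1_def by simp
  have E4': "r2*d2 = D2* s2" using E4 unfolding D2_def d2_def by simp
  have nd1: "d1 \<noteq> 0" using n3 unfolding d1_def .
  have nd2: "d2 \<noteq> 0" using n4 unfolding d2_def .
  have t: "tt n k = (-1::real) ^ k * (4 * y + 1) * (p1 * p2 * h) / (f * r1 * r2)"
    unfolding tt_def p1_def p2_def h_def f_def r1_def r2_def x_def y_def ..
  have c: "cc n k = (-1::real) ^ k * (q1 * q2 * h) / (f * s1 * s2)"
    unfolding cc_def q1_def q2_def h_def f_def s1_def s2_def x_def ..
  have "tt n k * (C1*C2*(D1*D2)) = (-1::real) ^ k * (4 * y + 1) * ((C1*p1) * (C2*p2) * h) * (D1*D2) / (f * r1 * r2)"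
    unfolding t by (simp add: mult_ac)
  also have "\<dots> = (-1::real) ^ k * (4 * y + 1) * ((q1*m1) * (q2*m2) * h) * (D1*D2) / (f * r1 * r2)"
    unfolding E1' E2' ..
  also have "\<dots> = (-1::real) ^ k * (4 * y + 1) * ((q1*m1) * (q2*m2) * h) * (d1*d2) / (f * s1 * s2)"
  proof -
    have "D1*D2 / (r1*r2) = d1*d2/(s1* s2)" using E3' E4' pr1 pr2 ps1 ps2 nd1 nd2
      by (simp add: field_simps)
    moreover have nz: "f \<noteq> 0" "r1 \<noteq> 0" "r2 \<noteq> 0" "s1 \<noteq> 0" "s2 \<noteq> 0" using ff pr1 pr2 ps1 ps2 by auto
    ultimately show ?thesis
    proof -
      define X where "X = (-1::real) ^ k * (4 * y + 1) * ((q1*m1) * (q2*m2) * h)"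
      assume eq: "D1*D2 / (r1*r2) = d1*d2/(s1* s2)"
      have "X * (D1*D2) / (f * r1 * r2) = (X/f) * (D1*D2 / (r1*r2))" by (simp add: field_simps nz)
      also have "\<dots> = (X/f) * (d1*d2/(s1* s2))" unfolding eq ..
      also have "\<dots> = X * (d1*d2) / (f * s1 * s2)" by (simp add: field_simps nz)
      finally show ?thesis unfolding X_def .
    qed
  qed
  also have "\<dots> = (4*y+1) * cc n k * (m1*m2*(d1*d2))"
    unfolding c by (simp add: mult_ac)
  finally have main: "tt n k * (C1*C2*(D1*D2)) = (4*y+1) * cc n k * (m1*m2*(d1*d2))" .
  have K: "(((x+1)*(3*x+1)*(3*x+2)^2*(12*x+5)*(12*x+11))*(6*x+7)*(2*x+1)*(6*x+5)) = -72*(C1*C2*(D1*D2))"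
    unfolding C1_def C2_def D1_def D2_def by algebra
  have M: "((y-3*x-3)*(y-3*x-2)*(y-3*x-1)*(y-2*x-11/6)*(y-2*x-5/6)*(2*x+4/3+y)*(2*x+7/3+y)*(3*x+3/2+y)*(3*x+5/2+y)) = m1*m2*(d1*d2)"
    unfolding m1_def m2_def d1_def d2_def by algebra
  have "tt n k * (((x+1)*(3*x+1)*(3*x+2)^2*(12*x+5)*(12*x+11))*(6*x+7)*(2*x+1)*(6*x+5))
  = -72*(4*y+1)*cc n k*((y-3*x-3)*(y-3*x-2)*(y-3*x-1)*(y-2*x-11/6)*(y-2*x-5/6)*(2*x+4/3+y)*(2*x+7/3+y)*(3*x+3/2+y)*(3*x+5/2+y))"
  proof -
    have "tt n k * (-72*(C1*C2*(D1*D2))) = -72*(tt n k * (C1*C2*(D1*D2)))" by (simp only: mult_ac)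
    also have "\<dots> = -72*((4*y+1) * cc n k * (m1*m2*(d1*d2)))" unfolding main ..
    also have "\<dots> = -72*(4*y+1) * cc n k * (m1*m2*(d1*d2))" by (simp only: mult_ac)
    finally show ?thesis unfolding K M .
  qed
  then show ?thesis unfolding x_def y_def .
qed

lemma lemC: "cc n (Suc k) * ((real k+1)*(2*real n+10/3+real k)*(3*real n+7/2+real k))
   = - cc n k * ((real k-3*real n-3)*(real k-2*real n-11/6)*(real k+1/2))"
proof -
  define x where "x = real n"
  define y where "y = real k"
  have x0: "x \<ge> 0" by (simp add: x_def)
  have y0: "y \<ge> 0" by (simp add: y_def)
  define q1 where "q1 = pochhammer (- 3 * x - 3) k"
  define q2 where "q2 = pochhammer (- 2 * x - 11/6) k"
  define h where "h = pochhammer (1/2::real) k"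
  define s1 where "s1 = pochhammer (2*x+10/3) k"
  define s2 where "s2 = pochhammer (3*x+7/2) k"
  define f where "f = (fact k::real)"
  have ps1: "s1 > 0" unfolding s1_def by (rule pochhammer_pos) (use x0 in auto)
  have ps2: "s2 > 0" unfolding s2_def by (rule pochhammer_pos) (use x0 in auto)
  have ff: "f > 0" by (simp add: f_def)
  have c: "cc n k = (-1::real) ^ k * (q1 * q2 * h) / (f * s1 * s2)"
    unfolding cc_def q1_def q2_def h_def f_def s1_def s2_def x_def ..
  have c1: "cc n (Suc k) = (-1::real) ^ k * (-1) * (q1 * (- 3 * x - 3 + y) * (q2 * (- 2 * x - 11/6 + y)) * (h * (1/2 + y)))
     / (f * (y+1) * (s1 * (2*x+10/3+y)) * (s2 * (3*x+7/2+y)))"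
    unfolding cc_def pochhammer_Suc fact_Suc power_Suc q1_def q2_def h_def f_def s1_def s2_def x_def y_def
    by (simp add: algebra_simps)
  have n3: "(y+1)*(2*x+10/3+y)*(3*x+7/2+y) \<noteq> 0"
  proof -
    have h0: "y+1 \<noteq> 0" using x0 y0 by linarith
    have h1: "2*x+10/3+y \<noteq> 0" using x0 y0 by linarith
    have h2: "3*x+7/2+y \<noteq> 0" using x0 y0 by linarith
    show ?thesis using h0 h1 h2 by simp
  qed
  have "cc n (Suc k) * ((y+1)*(2*x+10/3+y)*(3*x+7/2+y)) = - cc n k * ((y-3*x-3)*(y-2*x-11/6)*(y+1/2))"
  proof -
    have nz: "f \<noteq> 0" "s1 \<noteq> 0" "s2 \<noteq> 0" "(y+1) \<noteq> 0" "2*x+10/3+y \<noteq> 0" "3*x+7/2+y \<noteq> 0"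
      using ps1 ps2 ff x0 y0 by auto
    define W where "W = (y+1)*(2*x+10/3+y)*(3*x+7/2+y)"
    define X where "X = (-1::real) ^ k * (-1) * (q1 * (- 3 * x - 3 + y) * (q2 * (- 2 * x - 11/6 + y)) * (h * (1/2 + y)))"
    have W0: "W \<noteq> 0" unfolding W_def using nz by simp
    have c1': "cc n (Suc k) = X / ((f* s1* s2) * W)" unfolding c1 X_def W_def by (simp only: mult_ac)
    have eX: "X = - ((-1::real) ^ k * (q1 * q2 * h) * ((y-3*x-3)*(y-2*x-11/6)*(y+1/2)))"
      unfolding X_def by algebra
    have "cc n (Suc k) * W = X / (f* s1* s2)" unfolding c1' using W0 by (rule cancel_helper)
    also have "\<dots> = - ((-1::real) ^ k * (q1 * q2 * h) * ((y-3*x-3)*(y-2*x-11/6)*(y+1/2))) / (f* s1* s2)"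
      unfolding eX ..
    also have "\<dots> = - cc n k * ((y-3*x-3)*(y-2*x-11/6)*(y+1/2))" unfolding c by simp
    finally show ?thesis unfolding W_def .
  qed
  then show ?thesis unfolding x_def y_def .
qed

definition GG :: "nat \<Rightarrow> nat \<Rightarrow> real" where
  "GG n k = cc n k * real k * Qi (real n) (real k) / (60 * KK (real n))"

lemma KK_pos: "x \<ge> 0 \<Longrightarrow> KK x > 0"
  unfolding KK_def by simp

lemma regroup1: "(D * t1 - 81/20*e*u*g^2 * t0) * (60*K*b*c) =
     60*K*b*D*(t1*c) + 60*b*c*(81/20)*g*(-(t0*(K*g*u*e)))" for D t1 e u g t0 K b c :: real
  by algebra

lemma regroup2: "60*K*b*D*((4*y+1)*c0*a) + 60*b*e*(81/20)*g*(-(-72*(4*y+1)*c0*M))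
   = c0 * (60*K*D*(4*y+1)*a*b + 17496*g*(4*y+1)*M*b*e)" for K b D y c0 a e g M :: real
  by algebra

lemma lemT: "DD (real n) * tt (Suc n) k - NN (real n) * tt n k = GG n (Suc k) - GG n k"
proof -
  define x where "x = real n"
  define y where "y = real k"
  have x0: "x \<ge> 0" by (simp add: x_def)
  have y0: "y \<ge> 0" by (simp add: y_def)
  have A: "tt (Suc n) k * (3*x+7/2+y) = (4*y+1)*cc n k*(3*x+7/2)"
    using lemA[of n k] unfolding x_def y_def .
  have B: "tt n k * (KK x*(6*x+7)*(2*x+1)*(6*x+5))
    = -72*(4*y+1)*cc n k*((y-3*x-3)*(y-3*x-2)*(y-3*x-1)*(y-2*x-11/6)*(y-2*x-5/6)*(2*x+4/3+y)*(2*x+7/3+y)*(3*x+3/2+y)*(3*x+5/2+y))"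
    using lemB[of n k] unfolding x_def y_def KK_def .
  have C: "cc n (Suc k) * ((y+1)*(2*x+10/3+y)*(3*x+7/2+y)) = - cc n k * ((y-3*x-3)*(y-2*x-11/6)*(y+1/2))"
    using lemC[of n k] unfolding x_def y_def .
  have P: "60*KK x*DD x*(4*y+1)*(3*x+7/2)*(2*x+10/3+y)
  + 17496*(6*x+7)*(4*y+1)*((y-3*x-3)*(y-3*x-2)*(y-3*x-1)*(y-2*x-11/6)*(y-2*x-5/6)*(2*x+4/3+y)*(2*x+7/3+y)*(3*x+3/2+y)*(3*x+5/2+y))*(2*x+10/3+y)*(3*x+7/2+y)
  = -((y-3*x-3)*(y-2*x-11/6)*(y+1/2))*Qi x (y+1) - y*Qi x y*(2*x+10/3+y)*(3*x+7/2+y)"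
    by (rule polyid)
  define W where "W = 60*KK x*(2*x+10/3+y)*(3*x+7/2+y)"
  have Kp: "KK x > 0" using KK_pos x0 by blast
  have b1: "2*x+10/3+y > 0" "3*x+7/2+y > 0" using x0 y0 by linarith+
  have W0: "W \<noteq> 0" unfolding W_def using Kp b1 by simp
  define t1 where "t1 = tt (Suc n) k"
  define t0 where "t0 = tt n k"
  define c0 where "c0 = cc n k"
  define c1 where "c1 = cc n (Suc k)"
  have "(DD x * t1 - NN x * t0) * W =
     60*KK x*(2*x+10/3+y)*DD x*(t1*(3*x+7/2+y))
     + 60*(2*x+10/3+y)*(3*x+7/2+y)*(81/20)*(6*x+7)*(-(t0*(KK x*(6*x+7)*(2*x+1)*(6*x+5))))"
    unfolding W_def NN_def by (rule regroup1)
  also have "\<dots> = 60*KK x*(2*x+10/3+y)*DD x*((4*y+1)*c0*(3*x+7/2))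
     + 60*(2*x+10/3+y)*(3*x+7/2+y)*(81/20)*(6*x+7)*(-(-72*(4*y+1)*c0*((y-3*x-3)*(y-3*x-2)*(y-3*x-1)*(y-2*x-11/6)*(y-2*x-5/6)*(2*x+4/3+y)*(2*x+7/3+y)*(3*x+3/2+y)*(3*x+5/2+y))))"
    unfolding t1_def t0_def c0_def A B ..
  also have "\<dots> = c0 * (60*KK x*DD x*(4*y+1)*(3*x+7/2)*(2*x+10/3+y)
  + 17496*(6*x+7)*(4*y+1)*((y-3*x-3)*(y-3*x-2)*(y-3*x-1)*(y-2*x-11/6)*(y-2*x-5/6)*(2*x+4/3+y)*(2*x+7/3+y)*(3*x+3/2+y)*(3*x+5/2+y))*(2*x+10/3+y)*(3*x+7/2+y))"
    by (rule regroup2)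
  also have "\<dots> = c0 * (-((y-3*x-3)*(y-2*x-11/6)*(y+1/2))*Qi x (y+1) - y*Qi x y*(2*x+10/3+y)*(3*x+7/2+y))"
    unfolding P ..
  also have "\<dots> = (c1 * ((y+1)*(2*x+10/3+y)*(3*x+7/2+y))) * Qi x (y+1) - c0*y*Qi x y*(2*x+10/3+y)*(3*x+7/2+y)"
    unfolding c1_def c0_def C by algebra
  also have "\<dots> = (GG n (Suc k) - GG n k) * W"
  proof -
    have ys: "real (Suc k) = y + 1" unfolding y_def by simp
    have g1: "GG n (Suc k) = c1 * (y+1) * Qi x (y+1) / (60 * KK x)"
      unfolding GG_def c1_def ys x_def ..
    have g0: "GG n k = c0 * y * Qi x y / (60 * KK x)"
      unfolding GG_def c0_def x_def y_def ..
    have nz: "KK x \<noteq> 0" using Kp by simp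
    show ?thesis unfolding W_def g1 g0 by (simp add: field_simps nz)
  qed
  finally have "(DD x * t1 - NN x * t0) * W = (GG n (Suc k) - GG n k) * W" .
  then show ?thesis using W0 unfolding x_def t1_def t0_def by simp
qed

lemma tt_zero: "k > 3*n \<Longrightarrow> tt n k = 0"
proof -
  assume k: "k > 3*n"
  have e: "- 3 * real n = - (of_nat (3*n) :: real)" by simp
  have "pochhammer (- 3 * real n) k = 0" using pochhammer_of_nat_eq_0_lemma[OF k, where 'a=real] by simp
  then show ?thesis unfolding tt_def by simp
qed

lemma cc_zero: "k > 3*n+3 \<Longrightarrow> cc n k = 0"
proof -
  assume k: "k > 3*n+3"
  have e: "- 3 * real n - 3 = - (of_nat (3*n+3) :: real)" by simp
  have "pochhammer (- 3 * real n - 3) k = 0" using pochhammer_of_nat_eq_0_lemma[OF k, where 'a=real] by simp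
  then show ?thesis unfolding cc_def by simp
qed

lemma tt_suminf: "m > 3*n \<Longrightarrow> suminf (tt n) = sum (tt n) {..<m}"
  by (rule suminf_finite) (auto intro: tt_zero)

lemma recur: "DD (real n) * suminf (tt (Suc n)) = NN (real n) * suminf (tt n)"
proof -
  have s1: "suminf (tt (Suc n)) = sum (tt (Suc n)) {..<3*n+4}" by (rule tt_suminf) simp
  have s0: "suminf (tt n) = sum (tt n) {..<3*n+4}" by (rule tt_suminf) simp
  have "DD (real n) * sum (tt (Suc n)) {..<3*n+4} - NN (real n) * sum (tt n) {..<3*n+4}
      = (\<Sum>k<3*n+4. DD (real n) * tt (Suc n) k - NN (real n) * tt n k)"
    by (simp add: sum_distrib_left sum_subtractf)
  also have "\<dots> = (\<Sum>k<3*n+4. GG n (Suc k) - GG n k)" by (simp add: lemT)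
  also have "\<dots> = GG n (3*n+4) - GG n 0" by (rule sum_lessThan_telescope)
  also have "\<dots> = 0" unfolding GG_def using cc_zero[of n "3*n+4"] by simp
  finally show ?thesis unfolding s1 s0 by simp
qed

lemma regroup3: "c*z*((a1*p1)*(a2*p2)*(a3*p3)^2)/((b1*q1)*(b2*q2)*(b3*q3)*(b4*q4)) = (z*(a1*a2*a3^2)/(b1*b2*b3*b4)) * (c*(p1*p2*p3^2)/(q1*q2*q3*q4))" for z c a1 a2 a3 p1 p2 p3 b1 b2 b3 b4 q1 q2 q3 q4 :: real
  by (simp add: divide_inverse power_mult_distrib inverse_mult_distrib mult_ac)

lemma RR_rec: "DD (real n) * RR (Suc n) = NN (real n) * RR n"
proof -
  define x where "x = real n"
  have x0: "x \<ge> 0" by (simp add: x_def)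
  define cst where "cst = ((2^2 * 3^3) / 5^5 :: real)"
  define a1 where "a1 = pochhammer (5/6::real) n"
  define a2 where "a2 = pochhammer (1/2::real) n"
  define a3 where "a3 = pochhammer (7/6::real) n"
  define b1 where "b1 = pochhammer (7/15::real) n"
  define b2 where "b2 = pochhammer (13/15::real) n"
  define b3 where "b3 = pochhammer (16/15::real) n"
  define b4 where "b4 = pochhammer (4/15::real) n"
  define z where "z = cst ^ n"
  have r0: "RR n = z * (a1*a2*a3^2)/(b1*b2*b3*b4)"
    unfolding RR_def cst_def[symmetric] z_def a1_def a2_def a3_def b1_def b2_def b3_def b4_def ..
  have r1: "RR (Suc n) = cst * z * ((a1*(5/6+x)) * (a2*(1/2+x)) * (a3*(7/6+x))^2) / ((b1*(7/15+x)) * (b2*(13/15+x)) * (b3*(16/15+x)) * (b4*(4/15+x)))"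
    unfolding RR_def cst_def[symmetric] pochhammer_Suc power_Suc z_def a1_def a2_def a3_def b1_def b2_def b3_def b4_def x_def ..
  have q: "7/15 + x > 0" "13/15 + x > 0" "16/15 + x > 0" "4/15 + x > 0" using x0 by linarith+
  define P where "P = (5/6+x)*(1/2+x)*(7/6+x)^2"
  define Q where "Q = (7/15+x)*(13/15+x)*(16/15+x)*(4/15+x)"
  have Q0: "Q \<noteq> 0" unfolding Q_def using q by simp
  have r2: "RR (Suc n) = RR n * (cst * P / Q)"
    unfolding r1 r0 P_def Q_def by (rule regroup3)
  have DQ: "DD x = 50625 * Q" unfolding DD_def Q_def by algebra
  have "DD x * (cst * P / Q) = 50625 * cst * P" unfolding DQ using Q0 by simp
  also have "\<dots> = NN x" unfolding NN_def P_def cst_def by algebra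
  finally have e: "DD x * (cst * P / Q) = NN x" .
  have "DD x * RR (Suc n) = (DD x * (cst * P / Q)) * RR n" unfolding r2 by (simp only: mult_ac)
  also have "\<dots> = NN x * RR n" unfolding e ..
  finally show ?thesis unfolding x_def .
qed

lemma main: "suminf (tt n) = RR n"
proof (induction n)
  case 0
  have "suminf (tt 0) = sum (tt 0) {..<1}" by (rule tt_suminf) simp
  also have "\<dots> = 1" by (simp add: tt_def)
  finally show ?case by (simp add: RR_def)
next
  case (Suc n)
  have D: "DD (real n) > 0" unfolding DD_def by simp
  have "DD (real n) * suminf (tt (Suc n)) = DD (real n) * RR (Suc n)"
    using recur[of n] RR_rec[of n] Suc.IH by simp
  then show ?case using D by simp
qed

theorem theorem7:
  fixes n :: nat
  shows "(\<Sum>k. (-1::real) ^ k * (4 * real k + 1) *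
            (pochhammer (- 3 * real n) k * pochhammer (- 2 * real n + 1/6) k * pochhammer (1/2) k)
            / (fact k * pochhammer (2 * real n + 4/3) k * pochhammer (3 * real n + 3/2) k))
         = ((2^2 * 3^3) / 5^5) ^ n *
           (pochhammer (5/6) n * pochhammer (1/2) n * (pochhammer (7/6) n)^2)
           / (pochhammer (7/15) n * pochhammer (13/15) n * pochhammer (16/15) n * pochhammer (4/15) n)"
  using main[of n] unfolding tt_def RR_def .

end
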